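(* Let $C\subseteq\mathbb{R}^{n+1}$ be a proper open cone with base-point $b\in C$, let $S,T\in\mathcal T(C)\setminus\{C\}$, $p\in S$, $q\in T$, and suppose $f_{S,p}|_C$ and $f_{T,q}|_C$ are Busemann points of the Funk geometry on $C$. If $(z_k)_k$ is a sequence in $C$ that is an almost-geodesic with respect to the Funk metric $\mathcal F_C$ and converges to $f_{S,p}|_C$ in the Funk sense, then \[\lim_{k\to\infty}\big(\mathcal F_C(b,z_k)+f_{T,q}(z_k)\big)=\inf_{(x_k)_k}\liminf_{k\to\infty}\big(\mathcal F_C(b,x_k)+f_{T,q}(x_k)\big),\] where the infimum is taken over all sequences $(x_k)_k$ in $C$ converging to $f_{S,p}|_C$ in the Funk sense on $C$.
   Context: An open cone is a nonempty open convex $C$ with $\lambda C\subseteq C$ for $\lambda>0$; proper means $\overline C\cap(-\overline C)=\{0\}$. For an open cone $K$, $y\in K$, $x\in\mathbb{R}^{n+1}$: $M(x/y;K)=\inf\{\lambda>0\colon\lambda y-x\in\overline K\}$ and $\mathcal F_K(x,y)=\log M(x/y;K)$ (Funk metric). For $z\in\partial C$, $\tau(C,z)=\{\lambda(w-z)\colon\lambda>0,w\in C\}$; $\Gamma(\Pi)=\{\tau(T,z)\colon T\in\Pi,z\in\partial T\}$; $\mathcal T(C)=\bigcup_{k=1}^n\Gamma^k(\{C\})$ (all contain $C$). For $T\in\mathcal T(C)\cup\{C\}$ and $p\in T$, $f_{T,p}(w)=\mathcal F_T(w,p)-\mathcal F_T(b,p)$. A sequence $(x_k)$ in $C$ converges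 to $f$ in the Funk sense on $C$ if $f_{C,x_k}\to f$ pointwise on $C$. $f$ is a Busemann point of the Funk geometry on $C$ if some Funk $\epsilon$-almost-geodesic $(x_k)$ in $C$ (i.e. $\sum_{i=0}^m\mathcal F_C(x_i,x_{i+1})\leq\mathcal F_C(x_0,x_{m+1})+\epsilon$ for all $m$, some $\epsilon>0$) converges to $f$ in the Funk sense and $f$ is not of the form $\mathcal F_C(\cdot,p)-\mathcal F_C(b,p)$, $p\in C$. A sequence $(z_k)$ is an almost-geodesic with respect to $\mathcal F_C$ if there are reals $0=t_0<t_1<\cdots\to\infty$ such that for every $\epsilon>0$ there is $N$ with $|\mathcal F_C(z_0,z_j)+\mathcal F_C(z_j,z_k)-t_k|<\epsilon$ for all $k\geq j\geq N$. *)

theory Defs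
  imports "HOL-Analysis.Analysis"
begin

definition open_cone :: "'a::euclidean_space set \<Rightarrow> bool" where
  "open_cone C \<longleftrightarrow> C \<noteq> {} \<and> open C \<and> convex C \<and>
     (\<forall>l::real. \<forall>x\<in>C. l > 0 \<longrightarrow> l *\<^sub>R x \<in> C)"

definition proper_open_cone :: "'a::euclidean_space set \<Rightarrow> bool" where
  "proper_open_cone C \<longleftrightarrow> open_cone C \<and> closure C \<inter> uminus ` closure C = {0}"

definition funk_M :: "'a::euclidean_space set \<Rightarrow> 'a \<Rightarrow> 'a \<Rightarrow> real" where
  "funk_M K x y = Inf {l::real. l > 0 \<and> l *\<^sub>R y - x \<in> closure K}"

definition funk :: "'a::euclidean_space set \<Rightarrow> 'a \<Rightarrow> 'a \<Rightarrow> real" where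
  "funk K x y = ln (funk_M K x y)"

definition tau :: "'a::euclidean_space set \<Rightarrow> 'a \<Rightarrow> 'a set" where
  "tau C z = {l *\<^sub>R (w - z) | l w. l > 0 \<and> w \<in> C}"

definition Gamma :: "'a::euclidean_space set set \<Rightarrow> 'a set set" where
  "Gamma P = {tau T z | T z. T \<in> P \<and> z \<in> frontier T}"

text \<open>\<T>(C) = union of Gamma^k({C}) for k = 1..n, where the ambient space is R^(n+1)\<close>
definition tangent_cones :: "'a::euclidean_space set \<Rightarrow> 'a set set" where
  "tangent_cones C = (\<Union>k\<in>{1..DIM('a) - 1}. (Gamma ^^ k) {C})"

definition funk_f :: "'a::euclidean_space \<Rightarrow> 'a set \<Rightarrow> 'a \<Rightarrow> 'a \<Rightarrow> real" where
  "funk_f b T p w = funk T w p - funk T b p"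

definition funk_converges ::
  "'a::euclidean_space set \<Rightarrow> 'a \<Rightarrow> (nat \<Rightarrow> 'a) \<Rightarrow> ('a \<Rightarrow> real) \<Rightarrow> bool" where
  "funk_converges C b x f \<longleftrightarrow> (\<forall>w\<in>C. (\<lambda>k. funk_f b C (x k) w) \<longlonglongrightarrow> f w)"

definition funk_eps_almost_geodesic ::
  "'a::euclidean_space set \<Rightarrow> real \<Rightarrow> (nat \<Rightarrow> 'a) \<Rightarrow> bool" where
  "funk_eps_almost_geodesic C \<epsilon> x \<longleftrightarrow>
     (\<forall>m. (\<Sum>i\<le>m. funk C (x i) (x (Suc i))) \<le> funk C (x 0) (x (Suc m)) + \<epsilon>)"

text \<open>Busemann point; only the values of f on C matter (f stands for its restriction to C)\<close>
definition funk_busemann :: "'a::euclidean_space set \<Rightarrow> 'a \<Rightarrow> ('a \<Rightarrow> real) \<Rightarrow> bool" where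
  "funk_busemann C b f \<longleftrightarrow>
     (\<exists>x \<epsilon>. \<epsilon> > 0 \<and> (\<forall>k. x k \<in> C) \<and> funk_eps_almost_geodesic C \<epsilon> x \<and> funk_converges C b x f) \<and>
     \<not> (\<exists>p\<in>C. \<forall>w\<in>C. f w = funk C w p - funk C b p)"

definition funk_almost_geodesic :: "'a::euclidean_space set \<Rightarrow> (nat \<Rightarrow> 'a) \<Rightarrow> bool" where
  "funk_almost_geodesic C z \<longleftrightarrow>
     (\<exists>t::nat \<Rightarrow> real. t 0 = 0 \<and> strict_mono t \<and> filterlim t at_top sequentially \<and>
        (\<forall>\<epsilon>>0. \<exists>N. \<forall>j k. N \<le> j \<and> j \<le> k \<longrightarrow>
           \<bar>funk C (z 0) (z j) + funk C (z j) (z k) - t k\<bar> < \<epsilon>))"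

end

theory Submission imports Defs begin

lemma cl_zero: assumes "open_cone C" shows "0 \<in> closure C"
proof -
  from assms obtain x where x: "x \<in> C" unfolding open_cone_def by auto
  show ?thesis unfolding closure_approachable
  proof (intro allI impI)
    fix e :: real assume e: "e > 0"
    define l where "l = e / (norm x + 1)"
    have l: "l > 0" using e unfolding l_def by (smt (verit) divide_pos_pos norm_ge_zero)
    have "l *\<^sub>R x \<in> C" using assms x l unfolding open_cone_def by auto
    moreover have "dist (l *\<^sub>R x) 0 < e"
    proof -
      have "dist (l *\<^sub>R x) 0 = l * norm x" using l by simp
      also have "\<dots> < l * (norm x + 1)" using l by simp
      also have "\<dots> = e" proof -
        have np: "norm x + 1 \<noteq> 0" by (smt (verit) norm_ge_zero)
        then show ?thesis unfolding l_def by simp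
      qed
      finally show ?thesis .
    qed
    ultimately show "\<exists>y\<in>C. dist y 0 < e" by blast
  qed
qed

lemma cl_scale: assumes "open_cone C" "x \<in> closure C" "l \<ge> 0" shows "l *\<^sub>R x \<in> closure C"
proof (cases "l = 0")
  case True then show ?thesis using cl_zero[OF assms(1)] by simp
next
  case False
  then have lp: "l > 0" using assms by simp
  have "l *\<^sub>R x \<in> (*\<^sub>R) l ` closure C" using assms by blast
  also have "\<dots> = closure ((*\<^sub>R) l ` C)" by (rule closure_scaleR)
  also have "\<dots> \<subseteq> closure C" apply (rule closure_mono) using assms(1) lp unfolding open_cone_def by auto
  finally show ?thesis .
qed

lemma cl_add: assumes "open_cone C" "x \<in> closure C" "y \<in> closure C" shows "x + y \<in> closure C"
proof -
  have cv: "convex (closure C)" using assms(1) convex_closure unfolding open_cone_def by auto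
  have "(1/2) *\<^sub>R x + (1/2) *\<^sub>R y \<in> closure C"
    using convexD[OF cv assms(2,3), of "1/2" "1/2"] by simp
  from cl_scale[OF assms(1) this, of 2] show ?thesis by (simp add: scaleR_right_distrib)
qed

lemma zero_notin: assumes "proper_open_cone C" shows "0 \<notin> C"
proof
  assume z: "0 \<in> C"
  have oc: "open_cone C" using assms unfolding proper_open_cone_def by auto
  then have "open C" unfolding open_cone_def by auto
  then obtain e where e: "e > 0" "ball 0 e \<subseteq> C" using z open_contains_ball by blast
  obtain i :: 'a where i: "i \<in> Basis" using nonempty_Basis by blast
  define v where "v = (e/2) *\<^sub>R i"
  have nv: "norm v = e/2" using i e by (simp add: v_def)
  have "v \<in> C" "-v \<in> C" using e nv by (auto simp: dist_norm)
  then have "v \<in> closure C \<inter> uminus ` closure C"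
    using closure_subset by (auto intro!: image_eqI[of v uminus "-v"])
  then have "v = 0" using assms unfolding proper_open_cone_def by auto
  then show False using nv e by simp
qed

lemma neg_in: assumes "proper_open_cone C" "x \<in> C" "-x \<in> closure C" shows False
proof -
  have "x \<in> closure C \<inter> uminus ` closure C"
    using assms closure_subset by (auto intro!: image_eqI[of x uminus "-x"])
  then have "x = 0" using assms unfolding proper_open_cone_def by auto
  then show False using zero_notin[OF assms(1)] assms(2) by simp
qed

lemma M_set_ne: assumes "open_cone C" "y \<in> C"
  shows "\<exists>l>0. l *\<^sub>R y - x \<in> closure C"
proof -
  have "open C" using assms unfolding open_cone_def by auto
  then obtain e where e: "e > 0" "ball y e \<subseteq> C" using assms open_contains_ball by blast
  define l where "l = (norm x + 1) / e"
  have l: "l > 0" using e unfolding l_def by (smt (verit) divide_pos_pos norm_ge_zero)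
  have "dist y (y - (1/l) *\<^sub>R x) = norm x / l" using l by (simp add: dist_norm)
  also have "\<dots> < e" using e l unfolding l_def by (simp add: field_simps)
  finally have "y - (1/l) *\<^sub>R x \<in> C" using e by auto
  then have "l *\<^sub>R (y - (1/l) *\<^sub>R x) \<in> C" using assms l unfolding open_cone_def by auto
  then have "l *\<^sub>R y - x \<in> C" using l by (simp add: scaleR_right_diff_distrib)
  then show ?thesis using l closure_subset by blast
qed

lemma M_pos: assumes "proper_open_cone C" "x \<in> C" "y \<in> C" shows "funk_M C x y > 0"
proof (rule ccontr)
  assume "\<not> funk_M C x y > 0"
  then have M0: "funk_M C x y \<le> 0" by simp
  have oc: "open_cone C" using assms unfolding proper_open_cone_def by auto
  let ?S = "{l::real. l > 0 \<and> l *\<^sub>R y - x \<in> closure C}"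
  have ne: "?S \<noteq> {}" using M_set_ne[OF oc assms(3)] by auto
  have "-x \<in> closure (closure C)" unfolding closure_approachable
  proof (intro allI impI)
    fix e :: real assume e: "e > 0"
    have "Inf ?S < e / (norm y + 1)" using M0 e unfolding funk_M_def
      by (smt (verit) divide_pos_pos norm_ge_zero)
    then obtain l where l: "l \<in> ?S" "l < e / (norm y + 1)" using cInf_lessD[OF ne] by blast
    have "dist (l *\<^sub>R y - x) (-x) = l * norm y" using l by (simp add: dist_norm)
    also have "\<dots> \<le> l * (norm y + 1)" using l by simp
    also have "\<dots> < e" using l(2) by (smt (verit) norm_ge_zero pos_less_divide_eq)
    finally show "\<exists>y'\<in>closure C. dist y' (-x) < e" using l by blast
  qed
  then have "-x \<in> closure C" by (simp only: closure_closure)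
  then show False using neg_in[OF assms(1,2)] by blast
qed

lemma M_self: assumes "proper_open_cone C" "x \<in> C" shows "funk_M C x x = 1"
proof -
  have oc: "open_cone C" using assms unfolding proper_open_cone_def by auto
  show ?thesis unfolding funk_M_def
  proof (rule cInf_eq_minimum)
    show "1 \<in> {l::real. l > 0 \<and> l *\<^sub>R x - x \<in> closure C}" using cl_zero[OF oc] by simp
  next
    fix l assume l: "l \<in> {l::real. l > 0 \<and> l *\<^sub>R x - x \<in> closure C}"
    show "1 \<le> l"
    proof (rule ccontr)
      assume "\<not> 1 \<le> l"
      then have "1 - l > 0" by simp
      from cl_scale[OF oc _ less_imp_le[OF divide_pos_pos[OF zero_less_one this]], of "l *\<^sub>R x - x"] l
      have "(1/(1-l)) *\<^sub>R (l *\<^sub>R x - x) \<in> closure C" by auto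
      moreover have "(1/(1-l)) *\<^sub>R (l *\<^sub>R x - x) = -x"
      proof -
        have "l *\<^sub>R x - x = (l - 1) *\<^sub>R x" by (simp add: scaleR_diff_left)
        moreover have "(1/(1-l)) * (l - 1) = -1" using \<open>1 - l > 0\<close> by (simp add: field_simps)
        ultimately show ?thesis by (simp only: scaleR_scaleR) simp
      qed
      ultimately show False using neg_in[OF assms] by simp
    qed
  qed
qed

lemma funk_self: assumes "proper_open_cone C" "x \<in> C" shows "funk C x x = 0"
  using M_self[OF assms] unfolding funk_def by simp


lemma M_mul: assumes "proper_open_cone C" "x \<in> C" "y \<in> C" "w \<in> C"
  shows "funk_M C y w \<le> funk_M C y x * funk_M C x w"
proof -
  have oc: "open_cone C" using assms unfolding proper_open_cone_def by auto
  define A where "A = {l::real. l > 0 \<and> l *\<^sub>R x - y \<in> closure C}"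
  define B where "B = {l::real. l > 0 \<and> l *\<^sub>R w - x \<in> closure C}"
  define D where "D = {l::real. l > 0 \<and> l *\<^sub>R w - y \<in> closure C}"
  have neA: "A \<noteq> {}" using M_set_ne[OF oc assms(2)] unfolding A_def by auto
  have neB: "B \<noteq> {}" using M_set_ne[OF oc assms(4)] unfolding B_def by auto
  have bD: "bdd_below D" unfolding D_def by (rule bdd_belowI[of _ 0]) auto
  have MA: "funk_M C y x = Inf A" "funk_M C x w = Inf B" "funk_M C y w = Inf D"
    unfolding funk_M_def A_def B_def D_def by auto
  have pA: "Inf A > 0" using M_pos[OF assms(1,3,2)] MA by simp
  have key: "Inf D \<le> a * b" if a: "a \<in> A" and b: "b \<in> B" for a b
  proof -
    have "a *\<^sub>R (b *\<^sub>R w - x) + (a *\<^sub>R x - y) \<in> closure C"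
      using a b cl_add[OF oc cl_scale[OF oc]] unfolding A_def B_def by auto
    then have "(a*b) *\<^sub>R w - y \<in> closure C" by (simp add: algebra_simps)
    then have "a * b \<in> D" using a b unfolding A_def B_def D_def by auto
    then show ?thesis using bD by (rule cInf_lower)
  qed
  have "Inf D / Inf A \<le> b" if b: "b \<in> B" for b
  proof -
    have bp: "b > 0" using b unfolding B_def by auto
    have "Inf D / b \<le> Inf A"
      using neA key[OF _ b] bp by (intro cInf_greatest) (auto simp: pos_divide_le_eq mult.commute)
    then show ?thesis using bp pA by (simp add: field_simps)
  qed
  then have "Inf D / Inf A \<le> Inf B" using neB by (intro cInf_greatest) auto
  then show ?thesis using pA MA by (simp add: field_simps)
qed

lemma funk_tri: assumes "proper_open_cone C" "x \<in> C" "y \<in> C" "w \<in> C"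
  shows "funk C y w \<le> funk C y x + funk C x w"
proof -
  have "funk C y w \<le> ln (funk_M C y x * funk_M C x w)"
    unfolding funk_def using M_mul[OF assms] M_pos[OF assms(1,3,4)] by (rule ln_mono)
  also have "\<dots> = funk C y x + funk C x w" unfolding funk_def using M_pos[OF assms(1,3,2)] M_pos[OF assms(1,2,4)] by (simp add: ln_mult)
  finally show ?thesis .
qed


lemma horo_ineq:
  assumes pc: "proper_open_cone C" and s: "\<forall>k. s k \<in> C" and conv: "funk_converges C b s eta"
    and x: "x \<in> C" and y: "y \<in> C"
  shows "eta y \<le> funk C y x + eta x"
proof -
  have ly: "(\<lambda>k. funk C y (s k) - funk C b (s k)) \<longlonglongrightarrow> eta y"
    using conv y unfolding funk_converges_def funk_f_def by auto
  have lx: "(\<lambda>k. funk C x (s k) - funk C b (s k)) \<longlonglongrightarrow> eta x"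
    using conv x unfolding funk_converges_def funk_f_def by auto
  have "(\<lambda>k. (funk C y (s k) - funk C b (s k)) - (funk C x (s k) - funk C b (s k))) \<longlonglongrightarrow> eta y - eta x"
    using ly lx by (rule tendsto_diff)
  moreover have "\<forall>k. (funk C y (s k) - funk C b (s k)) - (funk C x (s k) - funk C b (s k)) \<le> funk C y x"
  proof
    fix k
    have "funk C y (s k) \<le> funk C y x + funk C x (s k)" using funk_tri[OF pc x y] s by blast
    then show "(funk C y (s k) - funk C b (s k)) - (funk C x (s k) - funk C b (s k)) \<le> funk C y x" by simp
  qed
  ultimately have "eta y - eta x \<le> funk C y x"
    by (intro LIMSEQ_le_const2) auto
  then show ?thesis by simp
qed

theorem lemma4p7p2:
  fixes C S T :: "'a::euclidean_space set" and b p q :: 'a and z :: "nat \<Rightarrow> 'a"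
  assumes "proper_open_cone C" and "b \<in> C"
    and "S \<in> tangent_cones C - {C}" and "T \<in> tangent_cones C - {C}"
    and "p \<in> S" and "q \<in> T"
    and "funk_busemann C b (funk_f b S p)" and "funk_busemann C b (funk_f b T q)"
    and "\<forall>k. z k \<in> C" and "funk_almost_geodesic C z"
    and "funk_converges C b z (funk_f b S p)"
  shows "(\<lambda>k. ereal (funk C b (z k) + funk_f b T q (z k))) \<longlonglongrightarrow>
    (INF x\<in>{x. (\<forall>k. x k \<in> C) \<and> funk_converges C b x (funk_f b S p)}.
       liminf (\<lambda>k. ereal (funk C b (x k) + funk_f b T q (x k))))"
proof -
  note pc = assms(1)
  define xi where "xi = funk_f b S p"
  define eta where "eta = funk_f b T q"
  define g where "g = (\<lambda>x::nat\<Rightarrow>'a. \<lambda>k. ereal (funk C b (x k) + eta (x k)))"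
  define X where "X = {x. (\<forall>k. x k \<in> C) \<and> funk_converges C b x xi}"
  define L where "L = (SUP y\<in>C. ereal (eta y - xi y))"
  obtain s where s: "\<forall>k. s k \<in> C" "funk_converges C b s eta"
    using assms(8) unfolding funk_busemann_def eta_def by auto
  have hi: "eta y \<le> funk C y x + eta x" if "x \<in> C" "y \<in> C" for x y
    using horo_ineq[OF pc s that] .
  have zX: "z \<in> X" using assms(9,11) unfolding X_def xi_def by auto
  have zconv: "\<And>w. w \<in> C \<Longrightarrow> (\<lambda>k. funk C w (z k) - funk C b (z k)) \<longlonglongrightarrow> xi w"
    using assms(11) unfolding funk_converges_def funk_f_def xi_def by auto
  have part1: "L \<le> liminf (g x)" if xX: "x \<in> X" for x
    unfolding L_def
  proof (rule SUP_least)
    fix y assume y: "y \<in> C"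
    have xC: "\<forall>k. x k \<in> C" and lim: "(\<lambda>k. funk C y (x k) - funk C b (x k)) \<longlonglongrightarrow> xi y"
      using xX y unfolding X_def funk_converges_def funk_f_def by auto
    have "(\<lambda>k. ereal (eta y - (funk C y (x k) - funk C b (x k)))) \<longlonglongrightarrow> ereal (eta y - xi y)"
      using lim by (intro tendsto_intros)
    then have "liminf (\<lambda>k. ereal (eta y - (funk C y (x k) - funk C b (x k)))) = ereal (eta y - xi y)"
      by (intro lim_imp_Liminf) auto
    moreover have "liminf (\<lambda>k. ereal (eta y - (funk C y (x k) - funk C b (x k)))) \<le> liminf (g x)"
    proof (rule Liminf_mono, rule always_eventually, rule allI)
      fix k
      have "eta y \<le> funk C y (x k) + eta (x k)" using hi[OF _ y] xC by auto
      then show "ereal (eta y - (funk C y (x k) - funk C b (x k))) \<le> g x k" unfolding g_def by simp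
    qed
    ultimately show "ereal (eta y - xi y) \<le> liminf (g x)" by simp
  qed
  have real2: "\<exists>N. \<forall>j\<ge>N. funk C b (z j) + xi (z j) \<le> 3 * e" if e: "e > 0" for e
  proof -
    obtain t where t: "\<forall>\<epsilon>>0. \<exists>N. \<forall>j k. N \<le> j \<and> j \<le> k \<longrightarrow>
           \<bar>funk C (z 0) (z j) + funk C (z j) (z k) - t k\<bar> < \<epsilon>"
      using assms(10) unfolding funk_almost_geodesic_def by blast
    then obtain N1 where N1: "\<forall>j k. N1 \<le> j \<and> j \<le> k \<longrightarrow>
           \<bar>funk C (z 0) (z j) + funk C (z j) (z k) - t k\<bar> < e" using e by blast
    have self: "funk C (z k) (z k) = 0" for k using funk_self[OF pc] assms(9) by auto
    have d: "funk C (z 0) (z k) - funk C (z j) (z k) \<ge> funk C (z 0) (z j) - 2 * e"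
      if "N1 \<le> j" "j \<le> k" for j k
      using N1[rule_format, of j k] N1[rule_format, of k k] that self[of k] by auto
    have l0: "(\<lambda>k. funk C (z 0) (z k) - funk C b (z k)) \<longlonglongrightarrow> xi (z 0)"
      using zconv assms(9) by auto
    then have "(\<lambda>k. - (funk C (z 0) (z k) - funk C b (z k))) \<longlonglongrightarrow> - xi (z 0)"
      by (rule tendsto_minus)
    then obtain N2 where N2: "\<forall>j\<ge>N2. dist (- (funk C (z 0) (z j) - funk C b (z j))) (- xi (z 0)) < e"
      using e unfolding lim_sequentially by blast
    have "funk C b (z j) + xi (z j) \<le> 3 * e" if j: "j \<ge> max N1 N2" for j
    proof -
      have lj: "(\<lambda>k. funk C (z j) (z k) - funk C b (z k)) \<longlonglongrightarrow> xi (z j)"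
        using zconv assms(9) by auto
      have "(\<lambda>k. (funk C (z j) (z k) - funk C b (z k)) - (funk C (z 0) (z k) - funk C b (z k)))
         \<longlonglongrightarrow> xi (z j) - xi (z 0)" using lj l0 by (rule tendsto_diff)
      moreover have "\<exists>M. \<forall>k\<ge>M. (funk C (z j) (z k) - funk C b (z k)) - (funk C (z 0) (z k) - funk C b (z k))
          \<le> 2 * e - funk C (z 0) (z j)"
        using d j by (intro exI[of _ j]) force
      ultimately have A: "xi (z j) - xi (z 0) \<le> 2 * e - funk C (z 0) (z j)"
        by (intro LIMSEQ_le_const2) auto
      have B: "funk C b (z j) - funk C (z 0) (z j) \<le> - xi (z 0) + e"
        using N2 j by (auto simp: dist_real_def)
      show ?thesis using A B by simp
    qed
    then show ?thesis by blast
  qed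
  have part2: "limsup (g z) \<le> L"
  proof (rule ereal_le_epsilon2)
    fix e :: real assume e: "e > 0"
    obtain N where N: "\<forall>j\<ge>N. funk C b (z j) + xi (z j) \<le> 3 * (e/3)" using real2[of "e/3"] e by auto
    show "limsup (g z) \<le> L + ereal e"
    proof (rule Limsup_bounded, unfold eventually_sequentially, intro exI[of _ N] allI impI)
      fix j assume j: "N \<le> j"
      have "g z j \<le> ereal (eta (z j) - xi (z j)) + ereal e"
        using N j unfolding g_def by auto
      also have "\<dots> \<le> L + ereal e" unfolding L_def
        using assms(9) by (intro add_right_mono SUP_upper) auto
      finally show "g z j \<le> L + ereal e" .
    qed
  qed
  define I where "I = (INF x\<in>X. liminf (g x))"
  have LI: "L \<le> I" unfolding I_def using part1 by (rule INF_greatest)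
  have Iz: "I \<le> liminf (g z)" unfolding I_def using zX by (rule INF_lower)
  have ll: "liminf (g z) \<le> limsup (g z)" by (rule Liminf_le_Limsup) simp
  have "liminf (g z) = I" "limsup (g z) = I" using LI Iz ll part2 by auto
  then have "g z \<longlonglongrightarrow> I" by (subst tendsto_iff_Liminf_eq_Limsup) auto
  then show ?thesis unfolding g_def I_def X_def eta_def xi_def .
qed

end
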